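(* Let $m,j$ be non-negative integers. Then (a) $\displaystyle\sum_{\gamma\models m,\ v(\gamma)=j}(-1)^{k(\gamma)}=(-1)^{m+j}\binom{\lfloor m/2\rfloor}{j}$; (b) $\displaystyle\sum_{\gamma\models m,\ u(\gamma)=j}(-1)^{k(\gamma)}=\begin{cases}0&\text{if } m\text{ is even},\\ (-1)^{m+j}\dbinom{\lfloor m/2\rfloor}{j}&\text{if } m\text{ is odd},\end{cases}$ where the sums run over compositions $\gamma$ of $m$.
   Context: A composition $\gamma=(g_1,\ldots,g_k)$ of $m$ (written $\gamma\models m$) is a sequence of positive integers with sum $m$ (the empty composition if $m=0$); $k(\gamma)=k$ is the number of parts, $v(\gamma)=\#\{i: g_i>1\}$ and $u(\gamma)=\#\{i\ne 1: g_i>1\}$. *)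

theory Defs
  imports Main
begin

definition compositions :: "nat \<Rightarrow> nat list set" where
  "compositions m = {gs. (\<forall>g\<in>set gs. 0 < g) \<and> sum_list gs = m}"

definition kparts :: "nat list \<Rightarrow> nat" where
  "kparts gs = length gs"

definition vparts :: "nat list \<Rightarrow> nat" where
  "vparts gs = length (filter (\<lambda>g. 1 < g) gs)"

definition uparts :: "nat list \<Rightarrow> nat" where
  "uparts gs = card {i. 1 \<le> i \<and> i < length gs \<and> 1 < gs ! i}"

end

theory Submission
  imports Defs
begin

lemma comp0: "compositions 0 = {[]}"
  unfolding compositions_def
  apply auto
  subgoal for x by (cases x) auto
  done

lemma compPos:
  assumes "0 < m"
  shows "compositions m = (\<Union>i\<in>{..<m}. Cons (m - i) ` compositions i)"
proof
  show "compositions m \<subseteq> (\<Union>i\<in>{..<m}. Cons (m - i) ` compositions i)"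
  proof
    fix gs assume gs: "gs \<in> compositions m"
    then obtain g r where gr: "gs = g # r" using assms unfolding compositions_def
      by (cases gs) auto
    have "g > 0" "sum_list r + g = m" "\<forall>x\<in>set r. 0 < x"
      using gs gr unfolding compositions_def by auto
    then have "sum_list r < m" "r \<in> compositions (sum_list r)" "g = m - sum_list r"
      unfolding compositions_def by auto
    then show "gs \<in> (\<Union>i\<in>{..<m}. Cons (m - i) ` compositions i)"
      using gr by blast
  qed
next
  show "(\<Union>i\<in>{..<m}. Cons (m - i) ` compositions i) \<subseteq> compositions m"
    unfolding compositions_def by auto
qed

lemma comp_finite: "finite (compositions m)"
proof (induction m rule: less_induct)
  case (less m)
  show ?case
  proof (cases "m = 0")
    case True then show ?thesis by (simp add: comp0)
  next
    case False
    then show ?thesis using compPos[of m] less by auto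
  qed
qed

lemma comp_sum:
  assumes "0 < m"
  shows "sum f (compositions m) = (\<Sum>i<m. \<Sum>gs\<in>compositions i. f ((m - i) # gs))"
proof -
  have "sum f (compositions m) = (\<Sum>i<m. sum f (Cons (m - i) ` compositions i))"
    unfolding compPos[OF assms]
  proof (rule sum.UNION_disjoint)
    show "finite {..<m}" by simp
    show "\<forall>i\<in>{..<m}. finite (Cons (m - i) ` compositions i)" using comp_finite by auto
    show "\<forall>i\<in>{..<m}. \<forall>j\<in>{..<m}. i \<noteq> j \<longrightarrow> Cons (m - i) ` compositions i \<inter> Cons (m - j) ` compositions j = {}"
      by auto
  qed
  also have "\<dots> = (\<Sum>i<m. \<Sum>gs\<in>compositions i. f ((m - i) # gs))"
    by (rule sum.cong) (auto simp: sum.reindex)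
  finally show ?thesis .
qed

definition A :: "nat \<Rightarrow> nat \<Rightarrow> int" where
  "A m j = (\<Sum>gs\<in>compositions m. if vparts gs = j then (-1)^length gs else 0)"

definition Ap :: "nat \<Rightarrow> nat \<Rightarrow> int" where
  "Ap m j = (if j = 0 then 0 else A m (j - 1))"

lemma A0: "A 0 j = (if j = 0 then 1 else 0)"
  unfolding A_def comp0 by (simp add: vparts_def)

lemma Arec:
  "A (Suc n) j = - (\<Sum>i<n. Ap i j) - A n j"
proof -
  have "A (Suc n) j = (\<Sum>i<Suc n. \<Sum>gs\<in>compositions i.
      if vparts ((Suc n - i) # gs) = j then (-1)^length ((Suc n - i) # gs) else 0)"
    unfolding A_def by (rule comp_sum) simp
  also have "\<dots> = (\<Sum>i<n. - Ap i j) + (- A n j)"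
  proof -
    have a: "(\<Sum>gs\<in>compositions i.
      if vparts ((Suc n - i) # gs) = j then (-1)^length ((Suc n - i) # gs) else (0::int)) = - Ap i j"
      if "i < n" for i
    proof -
      have "1 < Suc n - i" using that by simp
      then have "(\<Sum>gs\<in>compositions i.
        if vparts ((Suc n - i) # gs) = j then (-1)^length ((Suc n - i) # gs) else (0::int))
        = (\<Sum>gs\<in>compositions i. - (if Suc (vparts gs) = j then (-1)^length gs else 0))"
        by (intro sum.cong) (auto simp: vparts_def)
      also have "\<dots> = - Ap i j"
        unfolding Ap_def A_def
        by (cases j) (auto simp: sum_negf)
      finally show ?thesis .
    qed
    have b: "(\<Sum>gs\<in>compositions n.
      if vparts ((Suc n - n) # gs) = j then (-1)^length ((Suc n - n) # gs) else (0::int)) = - A n j"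
      unfolding A_def sum_negf[symmetric]
      by (intro sum.cong) (auto simp: vparts_def)
    show ?thesis using a b by simp
  qed
  finally show ?thesis by (simp add: sum_negf)
qed

lemma Arec2: "A (Suc (Suc n)) j = A n j - Ap n j"
  using Arec[of "Suc n" j] Arec[of n j] by simp

lemma Aclosed: "A m j = (-1) ^ (m + j) * int ((m div 2) choose j)"
proof (induction m arbitrary: j rule: less_induct)
  case (less m)
  show ?case
  proof (cases m)
    case 0 then show ?thesis by (simp add: A0)
  next
    case (Suc n)
    show ?thesis
    proof (cases n)
      case 0
      then show ?thesis using Suc Arec[of 0 j] by (simp add: A0)
    next
      case (Suc k)
      have IH: "A k i = (-1) ^ (k + i) * int ((k div 2) choose i)" for i
        using less Suc \<open>m = Suc n\<close> by simp
      have d: "Suc (Suc k) div 2 = Suc (k div 2)" by simp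
      show ?thesis
      proof (cases j)
        case 0
        then show ?thesis using Arec2[of k j] IH \<open>m = Suc n\<close> Suc by (simp add: Ap_def)
      next
        case (Suc j')
        have "A m j = A k (Suc j') - A k j'"
          using Arec2[of k j] \<open>m = Suc n\<close> \<open>n = Suc k\<close> Suc by (simp add: Ap_def)
        also have "\<dots> = (-1) ^ (k + Suc j') * (int ((k div 2) choose (Suc j')) + int ((k div 2) choose j'))"
          using IH by (simp add: algebra_simps)
        also have "\<dots> = (-1) ^ (m + j) * int ((m div 2) choose j)"
          using \<open>m = Suc n\<close> \<open>n = Suc k\<close> Suc by simp
        finally show ?thesis .
      qed
    qed
  qed
qed

lemma Asum: "(\<Sum>i<m. A i j) = (if even m then 0 else A (m - 1) j)"
proof (induction m)
  case 0 then show ?case by simp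
next
  case (Suc m)
  show ?case
  proof (cases "even m")
    case True then show ?thesis using Suc by simp
  next
    case False
    then obtain t where t: "m = Suc (2 * t)" by (metis oddE Suc_eq_plus1)
    have "A (m - 1) j + A m j = 0"
      unfolding Aclosed t by simp
    then show ?thesis using Suc False by simp
  qed
qed

lemma uparts_Cons: "uparts (g # gs) = vparts gs"
proof -
  have "{i. 1 \<le> i \<and> i < length (g # gs) \<and> 1 < (g # gs) ! i} = Suc ` {i. i < length gs \<and> 1 < gs ! i}"
  proof (rule set_eqI, rule iffI)
    fix i assume "i \<in> {i. 1 \<le> i \<and> i < length (g # gs) \<and> 1 < (g # gs) ! i}"
    then obtain k where "i = Suc k" "k < length gs" "1 < gs ! k"
      by (cases i) auto
    then show "i \<in> Suc ` {i. i < length gs \<and> 1 < gs ! i}" by blast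
  next
    fix i assume "i \<in> Suc ` {i. i < length gs \<and> 1 < gs ! i}"
    then show "i \<in> {i. 1 \<le> i \<and> i < length (g # gs) \<and> 1 < (g # gs) ! i}" by auto
  qed
  then show ?thesis unfolding uparts_def vparts_def length_filter_conv_card
    by (simp add: card_image)
qed

theorem lemma5p4:
  fixes m j :: nat
  shows "(\<Sum>gs\<in>{gs\<in>compositions m. vparts gs = j}. (-1::int) ^ kparts gs)
           = (-1) ^ (m + j) * int ((m div 2) choose j)
         \<and> (0 < m \<longrightarrow>
            (\<Sum>gs\<in>{gs\<in>compositions m. uparts gs = j}. (-1::int) ^ kparts gs)
              = (if even m then 0 else (-1) ^ (m + j) * int ((m div 2) choose j)))"
proof
  show "(\<Sum>gs\<in>{gs\<in>compositions m. vparts gs = j}. (-1::int) ^ kparts gs)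
           = (-1) ^ (m + j) * int ((m div 2) choose j)"
    using Aclosed[of m j] unfolding A_def kparts_def
    by (simp add: sum.inter_filter[OF comp_finite])
  show "0 < m \<longrightarrow>
            (\<Sum>gs\<in>{gs\<in>compositions m. uparts gs = j}. (-1::int) ^ kparts gs)
              = (if even m then 0 else (-1) ^ (m + j) * int ((m div 2) choose j))"
  proof
    assume m: "0 < m"
    have "(\<Sum>gs\<in>{gs\<in>compositions m. uparts gs = j}. (-1::int) ^ kparts gs)
      = (\<Sum>gs\<in>compositions m. if uparts gs = j then (-1::int) ^ length gs else 0)"
      by (simp add: sum.inter_filter[OF comp_finite] kparts_def)
    also have "\<dots> = (\<Sum>i<m. \<Sum>gs\<in>compositions i.
        if uparts ((m - i) # gs) = j then (-1::int) ^ length ((m - i) # gs) else 0)"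
      by (rule comp_sum[OF m])
    also have "\<dots> = (\<Sum>i<m. - A i j)"
      unfolding A_def sum_negf[symmetric] uparts_Cons
      by (intro sum.cong) auto
    also have "\<dots> = (if even m then 0 else (-1) ^ (m + j) * int ((m div 2) choose j))"
    proof -
      have "(\<Sum>i<m. - A i j) = - (if even m then 0 else A (m - 1) j)"
        by (simp add: sum_negf Asum)
      moreover have "odd m \<Longrightarrow> - A (m - 1) j = (-1) ^ (m + j) * int ((m div 2) choose j)"
        unfolding Aclosed by (elim oddE) simp
      ultimately show ?thesis by simp
    qed
    finally show "(\<Sum>gs\<in>{gs\<in>compositions m. uparts gs = j}. (-1::int) ^ kparts gs)
              = (if even m then 0 else (-1) ^ (m + j) * int ((m div 2) choose j))" .
  qed
qed

end
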